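(* Let $\theta\in[0,1]$ and $\psi=\frac12-\frac{\theta}{4}$. On the cycle graph $C_5$, let $X$ be the capture time measured in rounds in the tipsy cop and drunken robber game, and let $\mathbb{E}^i[X]$ be its expectation when the game starts with cop and robber at distance $i\in\{1,2\}$ and the robber moving first. Then \[ \mathbb{E}^1[X]=\frac{1-\frac{\theta}{4}}{\left(1-\frac{\theta}{4}\right)(2-\psi)-1},\qquad \mathbb{E}^2[X]=\frac{1}{\left(1-\frac{\theta}{4}\right)(2-\psi)-1}. \]
   Context: Tipsy cop and drunken robber game on a graph: a cop and a robber occupy distinct vertices and alternate moves, the robber moving first; on each move the mover must move to an adjacent vertex (no staying put). The robber always moves to a uniformly random neighbor. The cop, independently at each of her moves, with probability $\theta$ moves to a uniformly random neighbor and with probability $1-\theta$ moves to a neighbor that decreases her distance to the robber (onto the robber if adjacent). All random choices are independent; the robber is captured (game over) as soon as both occupy the same vertex. A round consists of one robber move followed by one cop move; the capture time in rounds is $X=n$ if the capture occurs during the $n$-th round (i.e. at move $2n-1$ or $2n$). *)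

theory Defs
  imports "HOL-Probability.Probability"
begin

definition C5_vert :: "nat set" where
  "C5_vert = {0..<5}"

definition C5_adj :: "nat \<Rightarrow> nat \<Rightarrow> bool" where
  "C5_adj u v \<longleftrightarrow> u < 5 \<and> v < 5 \<and> (v = (u + 1) mod 5 \<or> u = (v + 1) mod 5)"

definition C5_nbrs :: "nat \<Rightarrow> nat set" where
  "C5_nbrs u = {v. C5_adj u v}"

definition C5_dist :: "nat \<Rightarrow> nat \<Rightarrow> nat" where
  "C5_dist u v = min (nat ((int u - int v) mod 5)) (nat ((int v - int u) mod 5))"

text \<open>Game state: Some (cop, robber) while the game runs, None once captured (absorbing).\<close>
type_synonym gstate = "(nat \<times> nat) option"

definition robber_move :: "gstate \<Rightarrow> gstate pmf" where
  "robber_move s = (case s of None \<Rightarrow> return_pmf None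
     | Some (c, r) \<Rightarrow> map_pmf (\<lambda>r'. if r' = c then None else Some (c, r'))
                          (pmf_of_set (C5_nbrs r)))"

definition cop_move :: "real \<Rightarrow> gstate \<Rightarrow> gstate pmf" where
  "cop_move \<theta> s = (case s of None \<Rightarrow> return_pmf None
     | Some (c, r) \<Rightarrow> bind_pmf (bernoulli_pmf \<theta>) (\<lambda>drunk.
          map_pmf (\<lambda>c'. if c' = r then None else Some (c', r))
            (pmf_of_set (if drunk then C5_nbrs c
                         else {c' \<in> C5_nbrs c. C5_dist c' r < C5_dist c r}))))"

definition game_round :: "real \<Rightarrow> gstate \<Rightarrow> gstate pmf" where
  "game_round \<theta> s = bind_pmf (robber_move s) (cop_move \<theta>)"

fun state_after :: "real \<Rightarrow> nat \<Rightarrow> nat \<Rightarrow> nat \<Rightarrow> gstate pmf" where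
  "state_after \<theta> c r 0 = return_pmf (Some (c, r))"
| "state_after \<theta> c r (Suc n) = bind_pmf (state_after \<theta> c r n) (game_round \<theta>)"

definition capture_by :: "real \<Rightarrow> nat \<Rightarrow> nat \<Rightarrow> nat \<Rightarrow> real" where
  "capture_by \<theta> c r n = pmf (state_after \<theta> c r n) None"

definition expected_capture_time :: "real \<Rightarrow> nat \<Rightarrow> nat \<Rightarrow> ennreal" where
  "expected_capture_time \<theta> c r =
     (\<Sum>n. ennreal (real (Suc n)) *
            ennreal (capture_by \<theta> c r (Suc n) - capture_by \<theta> c r n))
     + \<infinity> * ennreal (1 - (SUP n. capture_by \<theta> c r n))"

end

theory Submission imports Defs begin


lemma int_bind:
  fixes h :: "'b \<Rightarrow> real"
  assumes h0: "\<And>x. 0 \<le> h x" and hB: "\<And>x. h x \<le> B"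
  shows "measure_pmf.expectation (bind_pmf M N) h = measure_pmf.expectation M (\<lambda>y. measure_pmf.expectation (N y) h)"
proof -
  have I: "integrable (measure_pmf P) h" for P
    by (rule measure_pmf.integrable_const_bound[where B=B]) (auto simp: h0 hB intro: order_trans[OF _ hB])
  have nn: "0 \<le> measure_pmf.expectation P h" for P by (rule integral_nonneg_AE) (simp add: h0)
  have le: "measure_pmf.expectation P h \<le> B" for P
  proof -
    have "measure_pmf.expectation P h \<le> measure_pmf.expectation P (\<lambda>_. B)"
      by (rule integral_mono[OF I]) (auto simp: hB)
    then show ?thesis by simp
  qed
  have I2: "integrable (measure_pmf M) (\<lambda>y. measure_pmf.expectation (N y) h)"
    by (rule measure_pmf.integrable_const_bound[where B=B]) (auto simp: nn le)
  have "ennreal (measure_pmf.expectation (bind_pmf M N) h) = (\<integral>\<^sup>+x. ennreal (h x) \<partial>bind_pmf M N)"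
    by (rule nn_integral_eq_integral[symmetric]) (auto simp: I h0)
  also have "\<dots> = (\<integral>\<^sup>+y. \<integral>\<^sup>+x. ennreal (h x) \<partial>N y \<partial>M)" by simp
  also have "\<dots> = (\<integral>\<^sup>+y. ennreal (measure_pmf.expectation (N y) h) \<partial>M)"
    by (rule nn_integral_cong, rule nn_integral_eq_integral) (auto simp: I h0)
  also have "\<dots> = ennreal (measure_pmf.expectation M (\<lambda>y. measure_pmf.expectation (N y) h))"
    by (rule nn_integral_eq_integral) (auto simp: I2 nn)
  finally show ?thesis
    by (subst (asm) ennreal_inj) (auto simp: nn integral_nonneg_AE)
qed

lemma cop_int:
  fixes h :: "gstate \<Rightarrow> real"
  assumes h0: "\<And>x. 0 \<le> h x" and hB: "\<And>x. h x \<le> B"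
  assumes t0: "0 \<le> \<theta>" and t1: "\<theta> \<le> 1" and ne: "C5_nbrs c \<noteq> {}"  and ne2: "{c' \<in> C5_nbrs c. C5_dist c' r < C5_dist c r} \<noteq> {}"
  shows "measure_pmf.expectation (cop_move \<theta> (Some (c,r))) h =
     \<theta> * (\<Sum>c'\<in>C5_nbrs c. h (if c' = r then None else Some (c', r))) / card (C5_nbrs c)
     + (1-\<theta>) * (\<Sum>c'\<in>{c' \<in> C5_nbrs c. C5_dist c' r < C5_dist c r}. h (if c' = r then None else Some (c', r))) / card {c' \<in> C5_nbrs c. C5_dist c' r < C5_dist c r}"
proof -
  have fin: "finite (C5_nbrs c)" unfolding C5_nbrs_def C5_adj_def by auto
  show ?thesis
    unfolding cop_move_def
    apply (simp add: int_bind[OF h0 hB] t0 t1)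
    apply (subst integral_pmf_of_set[OF ne fin])
    apply (subst integral_pmf_of_set[OF ne2])
    apply (simp add: fin)
    apply (simp add: algebra_simps)
    done
qed



lemma lt5: "(x::nat) < 5 \<longleftrightarrow> x = 0 \<or> x = 1 \<or> x = 2 \<or> x = 3 \<or> x = 4" by auto

lemma nbrs: "C5_nbrs 0 = {1,4}" "C5_nbrs 1 = {0,2}" "C5_nbrs 2 = {1,3}" "C5_nbrs 3 = {2,4}" "C5_nbrs 4 = {0,3}" "C5_nbrs (Suc 0) = {0,2}"
  by (auto simp: C5_nbrs_def C5_adj_def lt5)

definition filt :: "('a \<Rightarrow> bool) \<Rightarrow> 'a set \<Rightarrow> 'a set" where "filt P A = {x\<in>A. P x}"
lemma filt: "filt P (insert a A) = (if P a then insert a (filt P A) else filt P A)" "filt P {} = {}"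
  by (auto simp: filt_def)

lemma fin_nbrs: "finite (C5_nbrs c)" unfolding C5_nbrs_def C5_adj_def by auto

lemma cop_int':
  fixes h :: "gstate \<Rightarrow> real"
  assumes h0: "\<And>x. 0 \<le> h x" and hB: "\<And>x. h x \<le> B"
  assumes t0: "0 \<le> \<theta>" and t1: "\<theta> \<le> 1" and ne: "C5_nbrs c \<noteq> {}"
   and ne2: "filt (\<lambda>c'. C5_dist c' r < C5_dist c r) (C5_nbrs c) \<noteq> {}"
  shows "measure_pmf.expectation (cop_move \<theta> (Some (c,r))) h =
     \<theta> * (\<Sum>c'\<in>C5_nbrs c. h (if c' = r then None else Some (c', r))) / card (C5_nbrs c)
     + (1-\<theta>) * (\<Sum>c'\<in>filt (\<lambda>c'. C5_dist c' r < C5_dist c r) (C5_nbrs c). h (if c' = r then None else Some (c', r))) / card (filt (\<lambda>c'. C5_dist c' r < C5_dist c r) (C5_nbrs c))"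
  using cop_int[OF h0 hB t0 t1 ne, of r] ne2 unfolding filt_def by simp

lemma cop_None: "measure_pmf.expectation (cop_move \<theta> None) (h :: gstate \<Rightarrow> real) = h None"
  unfolding cop_move_def option.case by (subst integral_measure_pmf_real[where A="{None}" and f=h]) auto

lemma robber_int:
  "measure_pmf.expectation (robber_move (Some (c,r))) h =
     (\<Sum>r'\<in>C5_nbrs r. h (if r' = c then None else Some (c, r'))) / card (C5_nbrs r)" if "C5_nbrs r \<noteq> {}"
  unfolding robber_move_def by (simp add: integral_pmf_of_set[OF that fin_nbrs])

definition D :: "real \<Rightarrow> real" where "D \<theta> = (1 - \<theta>/4) * (2 - (1/2 - \<theta>/4)) - 1"
definition E1 :: "real \<Rightarrow> real" where "E1 \<theta> = (1 - \<theta>/4) / D \<theta>"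
definition E2 :: "real \<Rightarrow> real" where "E2 \<theta> = 1 / D \<theta>"

definition g :: "real \<Rightarrow> gstate \<Rightarrow> real" where
  "g \<theta> s = (case s of None \<Rightarrow> 0 | Some (c, r) \<Rightarrow> if C5_dist c r = 1 then E1 \<theta> else E2 \<theta>)"

context fixes \<theta> :: real assumes t0: "0 \<le> \<theta>" and t1: "\<theta> \<le> 1"
begin

lemma D_pos: "D \<theta> > 0"
proof -
  have "D \<theta> = 1/2 - \<theta>/8 - \<theta>^2/16" unfolding D_def by (simp add: field_simps power2_eq_square)
  moreover have "\<theta>^2 \<le> 1" using t0 t1 by (simp add: power_le_one)
  ultimately show ?thesis using t1 by linarith
qed

lemma E_nonneg: "0 \<le> E1 \<theta>" "0 \<le> E2 \<theta>"
  using D_pos t1 unfolding E1_def E2_def by auto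

lemma eq1: "E1 \<theta> = 1 + (1/2 - \<theta>/4) * E1 \<theta> + \<theta>/4 * E2 \<theta>"
  using D_pos unfolding E1_def E2_def by (simp add: field_simps) (simp add: D_def algebra_simps)
lemma eq2: "E2 \<theta> = 1 + (1/2 - \<theta>/4) * E1 \<theta> + \<theta>/2 * E2 \<theta>"
  using D_pos unfolding E1_def E2_def by (simp add: field_simps) (simp add: D_def algebra_simps)

lemma g0: "0 \<le> g \<theta> s" using E_nonneg by (auto simp: g_def split: option.splits)
lemma gB: "g \<theta> s \<le> E1 \<theta> + E2 \<theta>" using E_nonneg by (auto simp: g_def split: option.splits)

lemma round_g:
  assumes "c < 5" "r < 5" "c \<noteq> r"
  shows "measure_pmf.expectation (game_round \<theta> (Some (c,r))) (g \<theta>) = g \<theta> (Some (c,r)) - 1"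
proof -
  have "c = 0 \<or> c = 1 \<or> c = 2 \<or> c = 3 \<or> c = 4" "r = 0 \<or> r = 1 \<or> r = 2 \<or> r = 3 \<or> r = 4" using assms by auto
  then show ?thesis using assms
  unfolding game_round_def
  apply (simp only: int_bind[OF g0 gB])
  apply (elim disjE)
  apply (simp_all add: robber_int nbrs cop_None)
  apply (simp_all add: cop_int'[OF g0 gB t0 t1] nbrs filt C5_dist_def)
  apply (simp_all add: g_def C5_dist_def)
  apply (insert eq1 eq2)
  apply (simp_all add: field_simps)
  done
qed


definition ind :: "gstate \<Rightarrow> real" where "ind s = indicator {s. s \<noteq> None} s"

lemma ind0: "0 \<le> ind s" and ind1: "ind s \<le> 1" by (auto simp: ind_def indicator_def)

lemma round_ind:
  assumes "c < 5" "r < 5" "c \<noteq> r"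
  shows "measure_pmf.expectation (game_round \<theta> (Some (c,r))) ind \<le> 3/4"
proof -
  have "c = 0 \<or> c = 1 \<or> c = 2 \<or> c = 3 \<or> c = 4" "r = 0 \<or> r = 1 \<or> r = 2 \<or> r = 3 \<or> r = 4" using assms by auto
  then show ?thesis using assms
  unfolding game_round_def
  apply (simp only: int_bind[OF ind0 ind1])
  apply (elim disjE)
  apply (simp_all add: robber_int nbrs cop_None)
  apply (simp_all add: cop_int'[OF ind0 ind1 t0 t1] nbrs filt C5_dist_def)
  apply (simp_all add: ind_def)
  using t0 t1 by (simp_all add: field_simps)
qed

lemma round_None: "measure_pmf.expectation (game_round \<theta> None) (h :: gstate \<Rightarrow> real) = h None"
  unfolding game_round_def robber_move_def by (simp add: cop_None bind_return_pmf)

definition valid :: "gstate \<Rightarrow> bool" where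
  "valid s = (case s of None \<Rightarrow> True | Some (c, r) \<Rightarrow> c < 5 \<and> r < 5 \<and> c \<noteq> r)"

lemma nbrs_lt: "x \<in> C5_nbrs c \<Longrightarrow> x < 5" by (auto simp: C5_nbrs_def C5_adj_def)

lemma nbrs_ne: "r < 5 \<Longrightarrow> C5_nbrs r \<noteq> {}"
  by (auto simp: lt5 nbrs)

lemma sober_ne: assumes "c < 5" "r < 5" "c \<noteq> r"
  shows "{c' \<in> C5_nbrs c. C5_dist c' r < C5_dist c r} \<noteq> {}"
proof -
  have "c = 0 \<or> c = 1 \<or> c = 2 \<or> c = 3 \<or> c = 4" "r = 0 \<or> r = 1 \<or> r = 2 \<or> r = 3 \<or> r = 4" using assms by auto
  then have "filt (\<lambda>c'. C5_dist c' r < C5_dist c r) (C5_nbrs c) \<noteq> {}" using assms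
    apply (elim disjE)
    apply (simp_all add: nbrs filt C5_dist_def)
    done
  then show ?thesis by (simp add: filt_def)
qed

lemma round_valid:
  assumes "valid s" "s' \<in> set_pmf (game_round \<theta> s)"
  shows "valid s'"
proof (cases s)
  case None
  then show ?thesis using assms by (simp add: game_round_def robber_move_def cop_move_def)
next
  case (Some p)
  obtain c r where p: "s = Some (c, r)" using Some by (cases p) auto
  have v: "c < 5" "r < 5" "c \<noteq> r" using assms(1) p by (auto simp: valid_def)
  from assms(2) obtain m where m: "m \<in> set_pmf (robber_move s)" "s' \<in> set_pmf (cop_move \<theta> m)"
    by (auto simp: game_round_def)
  show ?thesis
  proof (cases m)
    case None
    then show ?thesis using m by (simp add: cop_move_def valid_def)
  next
    case (Some q)
    then obtain r' where q: "m = Some (c, r')" "r' \<in> C5_nbrs r" "r' \<noteq> c"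
      using m(1) p nbrs_ne[OF v(2)] fin_nbrs by (auto simp: robber_move_def split: if_splits)
    have r'5: "r' < 5" using q nbrs_lt by auto
    let ?X = "\<lambda>b. if b then C5_nbrs c else {c' \<in> C5_nbrs c. C5_dist c' r' < C5_dist c r'}"
    have A: "set_pmf (pmf_of_set (?X b)) = ?X b" for b
    proof (cases b)
      case True then show ?thesis using nbrs_ne[OF v(1)] fin_nbrs by simp
    next
      case False
      have "finite {c' \<in> C5_nbrs c. C5_dist c' r' < C5_dist c r'}" using fin_nbrs by simp
      then show ?thesis using False sober_ne[OF v(1) r'5 q(3)[symmetric]] by simp
    qed
    have "s' \<in> (\<Union>b\<in>set_pmf (bernoulli_pmf \<theta>). (\<lambda>c'. if c' = r' then None else Some (c', r')) ` ?X b)"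
      using m(2) unfolding q(1) cop_move_def option.case prod.case set_bind_pmf set_map_pmf A .
    then obtain b c' where "c' \<in> ?X b" "s' = (if c' = r' then None else Some (c', r'))" by blast
    then show ?thesis using r'5 nbrs_lt by (auto simp: valid_def split: if_splits)
  qed
qed

lemma state_valid:
  assumes "c < 5" "r < 5" "c \<noteq> r"
  shows "\<forall>s\<in>set_pmf (state_after \<theta> c r n). valid s"
proof (induction n)
  case 0
  then show ?case using assms by (simp add: valid_def)
next
  case (Suc n)
  then show ?case using round_valid by (auto simp: game_round_def[symmetric])
qed

lemma round_g_all: "valid s \<Longrightarrow> measure_pmf.expectation (game_round \<theta> s) (g \<theta>) = g \<theta> s - ind s"
  by (auto simp: valid_def round_None g_def ind_def round_g split: option.splits)

lemma round_ind_all: "valid s \<Longrightarrow> measure_pmf.expectation (game_round \<theta> s) ind \<le> 3/4 * ind s"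
proof (cases s)
  case None then show ?thesis by (simp add: round_None ind_def)
next
  case (Some p)
  then obtain a b where ab: "s = Some (a, b)" by (cases p) auto
  moreover assume "valid s"
  ultimately have "a < 5" "b < 5" "a \<noteq> b" by (auto simp: valid_def)
  moreover have "ind s = 1" using ab by (simp add: ind_def)
  ultimately show ?thesis using round_ind ab by simp
qed

lemma g_ind: "g \<theta> s \<le> (E1 \<theta> + E2 \<theta>) * ind s"
  using E_nonneg by (auto simp: g_def ind_def split: option.splits)

lemma integrable_bd: "(\<And>x. 0 \<le> f x) \<Longrightarrow> (\<And>x. f x \<le> B) \<Longrightarrow> integrable (measure_pmf M) (f :: _ \<Rightarrow> real)"
  by (rule measure_pmf.integrable_const_bound[where B=B]) (auto intro: order_trans)

lemma exp_bd: "(\<And>x. 0 \<le> f x) \<Longrightarrow> (\<And>x. f x \<le> B) \<Longrightarrow> measure_pmf.expectation M (f :: _ \<Rightarrow> real) \<le> B"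
proof -
  assume f0: "\<And>x. 0 \<le> f x" and fB: "\<And>x. f x \<le> B"
  have "measure_pmf.expectation M f \<le> measure_pmf.expectation M (\<lambda>_. B)"
    by (rule integral_mono[OF integrable_bd[OF f0 fB]]) (auto simp: fB)
  then show ?thesis by simp
qed

lemma int_g: "integrable (measure_pmf M) (g \<theta>)" by (rule integrable_bd[OF g0 gB])
lemma int_ind: "integrable (measure_pmf M) ind" by (rule integrable_bd[OF ind0 ind1])

lemma one_minus_pmf: "1 - pmf M None = measure_pmf.expectation M ind"
proof -
  have "measure_pmf.expectation M ind = measure_pmf.expectation M (indicator {s. s \<noteq> None})"
    unfolding ind_def by simp
  also have "\<dots> = measure_pmf.prob M {s. s \<noteq> None}" by simp
  also have "\<dots> = 1 - measure_pmf.prob M {None}"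
  proof -
    have "{s. s \<noteq> None} = space (measure_pmf M) - {None}" by auto
    then show ?thesis using measure_pmf.prob_compl[of "{None}" M] by simp
  qed
  finally show ?thesis by (simp add: measure_pmf_single)
qed


lemma main_val:
  assumes v: "c < 5" "r < 5" "c \<noteq> r"
  shows "expected_capture_time \<theta> c r = ennreal (g \<theta> (Some (c, r)))"
proof -
  define S where "S n = state_after \<theta> c r n" for n
  define t where "t n = measure_pmf.expectation (S n) ind" for n
  define G where "G n = measure_pmf.expectation (S n) (g \<theta>)" for n
  define K where "K = E1 \<theta> + E2 \<theta>"
  have SV: "\<forall>s\<in>set_pmf (S n). valid s" for n unfolding S_def by (rule state_valid[OF v])
  have Ssuc: "S (Suc n) = bind_pmf (S n) (game_round \<theta>)" for n by (simp add: S_def)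
  have cap: "capture_by \<theta> c r n = 1 - t n" for n
    using one_minus_pmf[of "S n"] unfolding capture_by_def t_def S_def by simp
  have t0': "0 \<le> t n" for n unfolding t_def by (rule integral_nonneg_AE) (simp add: ind0)
  have tstep: "t (Suc n) \<le> 3/4 * t n" for n
  proof -
    have "t (Suc n) = measure_pmf.expectation (S n) (\<lambda>s. measure_pmf.expectation (game_round \<theta> s) ind)"
      unfolding t_def Ssuc by (rule int_bind[OF ind0 ind1])
    also have "\<dots> \<le> measure_pmf.expectation (S n) (\<lambda>s. 3/4 * ind s)"
    proof (rule integral_mono_AE)
      show "AE s in measure_pmf (S n). measure_pmf.expectation (game_round \<theta> s) ind \<le> 3/4 * ind s"
        using SV round_ind_all by (simp add: AE_measure_pmf_iff)
    qed (auto intro!: integrable_bd[where B=1] simp: int_ind integral_nonneg_AE ind0 ind1 exp_bd)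
    also have "\<dots> = 3/4 * t n" unfolding t_def by simp
    finally show ?thesis .
  qed
  have tpow: "t n \<le> (3/4)^n" for n
  proof (induction n)
    case 0 then show ?case by (simp add: t_def S_def ind_def)
  next
    case (Suc n) then show ?case using tstep[of n] by simp
  qed
  have Gstep: "G (Suc n) = G n - t n" for n
  proof -
    have "G (Suc n) = measure_pmf.expectation (S n) (\<lambda>s. measure_pmf.expectation (game_round \<theta> s) (g \<theta>))"
      unfolding G_def Ssuc by (rule int_bind[OF g0 gB])
    also have "\<dots> = measure_pmf.expectation (S n) (\<lambda>s. g \<theta> s - ind s)"
      by (rule integral_cong_AE) (auto simp: AE_measure_pmf_iff SV round_g_all)
    also have "\<dots> = G n - t n" unfolding G_def t_def by (rule Bochner_Integration.integral_diff[OF int_g int_ind])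
    finally show ?thesis .
  qed
  have G0: "G 0 = g \<theta> (Some (c, r))" by (simp add: G_def S_def)
  have Gnn: "0 \<le> G n" for n unfolding G_def by (rule integral_nonneg_AE) (simp add: g0)
  have GK: "G n \<le> K * t n" for n
  proof -
    have "G n \<le> measure_pmf.expectation (S n) (\<lambda>s. K * ind s)"
      unfolding G_def K_def by (rule integral_mono[OF int_g]) (auto simp: int_ind g_ind)
    then show ?thesis by (simp add: t_def)
  qed
  have K0: "0 \<le> K" using E_nonneg by (simp add: K_def)
  have pow0: "(\<lambda>n. (3/4::real)^n) \<longlonglongrightarrow> 0" by (rule LIMSEQ_realpow_zero) auto
  have tlim: "t \<longlonglongrightarrow> 0"
    by (rule real_tendsto_sandwich[OF _ _ tendsto_const pow0]) (auto simp: t0' tpow)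
  have Glim: "G \<longlonglongrightarrow> 0"
  proof (rule real_tendsto_sandwich[OF _ _ tendsto_const])
    show "(\<lambda>n. K * t n) \<longlonglongrightarrow> 0" using tendsto_mult[OF tendsto_const tlim, of K] by simp
    show "\<forall>\<^sub>F n in sequentially. 0 \<le> G n" by (simp add: Gnn)
    show "\<forall>\<^sub>F n in sequentially. G n \<le> K * t n" by (simp add: GK)
  qed
  have ntlim: "(\<lambda>n. real n * t n) \<longlonglongrightarrow> 0"
  proof (rule real_tendsto_sandwich[OF _ _ tendsto_const])
    show "(\<lambda>n. real n * (3/4::real)^n) \<longlonglongrightarrow> 0"
      using powser_times_n_limit_0[of "3/4::real"] by simp
    show "\<forall>\<^sub>F n in sequentially. 0 \<le> real n * t n" by (auto simp: t0')
    show "\<forall>\<^sub>F n in sequentially. real n * t n \<le> real n * (3/4)^n"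
      using tpow by (simp add: mult_left_mono)
  qed
  define a where "a n = real (Suc n) * (capture_by \<theta> c r (Suc n) - capture_by \<theta> c r n)" for n
  have a_eq: "a n = real (Suc n) * (t n - t (Suc n))" for n by (simp add: a_def cap)
  have a0: "0 \<le> a n" for n using tstep[of n] t0'[of n] by (simp add: a_eq)
  have psum: "(\<Sum>k<N. a k) = (\<Sum>k<N. t k) - real N * t N" for N
    by (induction N) (simp_all add: a_eq algebra_simps)
  have tsum: "(\<Sum>k<N. t k) = G 0 - G N" for N
    by (induction N) (simp_all add: Gstep)
  have "(\<lambda>N. \<Sum>k<N. a k) \<longlonglongrightarrow> G 0 - 0 - 0"
    unfolding psum tsum by (intro tendsto_diff tendsto_const Glim ntlim)
  then have asums: "a sums G 0" by (simp add: sums_def)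
  have P1: "(\<Sum>n. ennreal (real (Suc n)) * ennreal (capture_by \<theta> c r (Suc n) - capture_by \<theta> c r n)) = ennreal (G 0)"
  proof -
    have "(\<Sum>n. ennreal (real (Suc n)) * ennreal (capture_by \<theta> c r (Suc n) - capture_by \<theta> c r n)) = (\<Sum>n. ennreal (a n))"
    proof (rule suminf_cong)
      fix n
      have "0 \<le> capture_by \<theta> c r (Suc n) - capture_by \<theta> c r n" using tstep[of n] t0'[of n] by (simp add: cap)
      then show "ennreal (real (Suc n)) * ennreal (capture_by \<theta> c r (Suc n) - capture_by \<theta> c r n) = ennreal (a n)"
        unfolding a_def by (simp add: ennreal_mult)
    qed
    also have "\<dots> = ennreal (\<Sum>n. a n)" by (rule suminf_ennreal2[OF a0 sums_summable[OF asums]])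
    also have "\<dots> = ennreal (G 0)" using sums_unique[OF asums] by simp
    finally show ?thesis .
  qed
  have inc: "incseq (capture_by \<theta> c r)"
  proof (rule incseq_SucI)
    fix n
    show "capture_by \<theta> c r n \<le> capture_by \<theta> c r (Suc n)"
      using tstep[of n] t0'[of n] unfolding cap by linarith
  qed
  have bdd: "bdd_above (range (capture_by \<theta> c r))"
    by (rule bdd_aboveI[where M=1]) (auto simp: cap t0')
  have "capture_by \<theta> c r \<longlonglongrightarrow> (SUP n. capture_by \<theta> c r n)" by (rule LIMSEQ_incseq_SUP[OF bdd inc])
  moreover have "capture_by \<theta> c r \<longlonglongrightarrow> 1"
    unfolding cap using tendsto_diff[OF tendsto_const tlim, of 1] by simp
  ultimately have SUP1: "(SUP n. capture_by \<theta> c r n) = 1" using LIMSEQ_unique by blast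
  show ?thesis unfolding expected_capture_time_def P1 SUP1 G0 by simp
qed

end

lemma dist_self: "C5_dist c c = 0" by (simp add: C5_dist_def)

theorem mainTheorem10:
  fixes \<theta> \<psi> :: real
  assumes "0 \<le> \<theta>" and "\<theta> \<le> 1"
    and "\<psi> = 1/2 - \<theta>/4"
  shows "(\<forall>c\<in>C5_vert. \<forall>r\<in>C5_vert. C5_dist c r = 1 \<longrightarrow>
            expected_capture_time \<theta> c r
              = ennreal ((1 - \<theta>/4) / ((1 - \<theta>/4) * (2 - \<psi>) - 1)))
       \<and> (\<forall>c\<in>C5_vert. \<forall>r\<in>C5_vert. C5_dist c r = 2 \<longrightarrow>
            expected_capture_time \<theta> c r
              = ennreal (1 / ((1 - \<theta>/4) * (2 - \<psi>) - 1)))"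
proof (intro conjI ballI impI)
  fix c r assume cr: "c \<in> C5_vert" "r \<in> C5_vert"
  have ne: "C5_dist c r \<noteq> 0 \<Longrightarrow> c \<noteq> r" using dist_self by auto
  {
    assume d: "C5_dist c r = 1"
    then show "expected_capture_time \<theta> c r = ennreal ((1 - \<theta>/4) / ((1 - \<theta>/4) * (2 - \<psi>) - 1))"
      using main_val[OF assms(1,2)] cr ne by (simp add: C5_vert_def g_def E1_def D_def assms(3))
  next
    assume d: "C5_dist c r = 2"
    then show "expected_capture_time \<theta> c r = ennreal (1 / ((1 - \<theta>/4) * (2 - \<psi>) - 1))"
      using main_val[OF assms(1,2)] cr ne by (simp add: C5_vert_def g_def E2_def D_def assms(3))
  }
qed

end
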